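(* Let $(X,* )$ be an associative shelf. For $n\ge 0$ let $C_n=\mathbb{Z}X^{n+1}$ (the free abelian group on $X^{n+1}$), and for $0\le i\le n$ define homomorphisms $d_i:C_n\to C_{n-1}$ on basis elements by $$d_i(x_0,\dots,x_n)=\begin{cases}(x_0*x_1,x_2,\dots,x_{n-1},x_n*x_0) & i=0,\\ (x_n*x_0,x_1,\dots,x_{n-2},x_{n-1}*x_n) & i=n,\\ (x_0,\dots,x_{i-2},x_{i-1}*x_i,x_i*x_{i+1},x_{i+2},\dots,x_n) & 0<i<n.\end{cases}$$ (For $n=1$ this means $d_0(x_0,x_1)=x_0*x_1*x_0$ and $d_1(x_0,x_1)=x_1*x_0*x_1$ in $C_0=\mathbb{Z}X$.) Then $(C_n,d_i)$ is a pre-simplicial module, i.e. $d_i\circ d_j=d_{j-1}\circ d_i$ on $C_{n+1}$ for all $0\le i<j\le n+1$.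
   Context: A shelf is a set $X$ with a binary operation $*$ satisfying right self-distributivity $(a*b)*c=(a*c)*(b*c)$ for all $a,b,c\in X$. An associative shelf is a shelf whose operation is also associative (so products may be written without parentheses). *)

theory Defs
  imports "HOL-Library.Poly_Mapping"
begin

definition shelf :: "('a \<Rightarrow> 'a \<Rightarrow> 'a) \<Rightarrow> bool" where
  "shelf f \<longleftrightarrow> (\<forall>a b c. f (f a b) c = f (f a c) (f b c))"

definition associative_shelf :: "('a \<Rightarrow> 'a \<Rightarrow> 'a) \<Rightarrow> bool" where
  "associative_shelf f \<longleftrightarrow> shelf f \<and> (\<forall>a b c. f (f a b) c = f a (f b c))"

definition chains :: "nat \<Rightarrow> ('a list \<Rightarrow>\<^sub>0 int) set" where
  "chains n = {c. Poly_Mapping.keys c \<subseteq> {xs. length xs = n + 1}}"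

definition lin_ext :: "('a \<Rightarrow> 'b) \<Rightarrow> ('a \<Rightarrow>\<^sub>0 int) \<Rightarrow> ('b \<Rightarrow>\<^sub>0 int)" where
  "lin_ext g c = (\<Sum>x\<in>Poly_Mapping.keys c. Poly_Mapping.single (g x) (Poly_Mapping.lookup c x))"

definition face :: "('a \<Rightarrow> 'a \<Rightarrow> 'a) \<Rightarrow> nat \<Rightarrow> nat \<Rightarrow> 'a list \<Rightarrow> 'a list" where
  "face f n i xs =
    (if n = 1 then
       (if i = 0 then [f (f (xs!0) (xs!1)) (xs!0)] else [f (f (xs!1) (xs!0)) (xs!1)])
     else if i = 0 then
       f (xs!0) (xs!1) # take (n - 2) (drop 2 xs) @ [f (xs!n) (xs!0)]
     else if i = n then
       f (xs!n) (xs!0) # take (n - 2) (drop 1 xs) @ [f (xs!(n-1)) (xs!n)]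
     else
       take (i - 1) xs @ [f (xs!(i-1)) (xs!i), f (xs!i) (xs!(i+1))] @ drop (i + 2) xs)"

definition bdry :: "('a \<Rightarrow> 'a \<Rightarrow> 'a) \<Rightarrow> nat \<Rightarrow> nat \<Rightarrow> ('a list \<Rightarrow>\<^sub>0 int) \<Rightarrow> ('a list \<Rightarrow>\<^sub>0 int)" where
  "bdry f n i = lin_ext (face f n i)"

end

theory Submission
  imports Defs
begin

lemma face_len: "n \<ge> 1 \<Longrightarrow> length xs = Suc n \<Longrightarrow> i \<le> n \<Longrightarrow> length (face f n i xs) = n"
  unfolding face_def by auto

lemma face_nth0:
  assumes "n \<ge> 2" "length xs = Suc n" "k < n"
  shows "face f n 0 xs ! k =
 (if k = 0 then f (xs!0) (xs!1) else if k = n-1 then f (xs!n) (xs!0) else xs!(k+1))"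
proof -
  have "face f n 0 xs = f (xs!0) (xs!1) # take (n - 2) (drop 2 xs) @ [f (xs!n) (xs!0)]"
    using assms unfolding face_def by simp
  then show ?thesis using assms
    by (cases k) (auto simp: nth_append)
qed

lemma face_nthn:
  assumes "n \<ge> 2" "length xs = Suc n" "k < n"
  shows "face f n n xs ! k =
 (if k = 0 then f (xs!n) (xs!0) else if k = n-1 then f (xs!(n-1)) (xs!n) else xs!k)"
proof -
  have "face f n n xs = f (xs!n) (xs!0) # take (n - 2) (drop 1 xs) @ [f (xs!(n-1)) (xs!n)]"
    using assms unfolding face_def by simp
  then show ?thesis using assms
    by (cases k) (auto simp: nth_append)
qed

lemma face_nthi:
  assumes "n \<ge> 2" "length xs = Suc n" "k < n" "0 < i" "i < n"
  shows "face f n i xs ! k =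
 (if k < i-1 then xs!k else if k = i-1 then f (xs!(i-1)) (xs!i) else if k = i then f (xs!i) (xs!(i+1)) else xs!(k+1))"
proof -
  have "face f n i xs = take (i - 1) xs @ [f (xs!(i-1)) (xs!i), f (xs!i) (xs!(i+1))] @ drop (i + 2) xs"
    using assms unfolding face_def by simp
  then show ?thesis using assms
    by (auto simp: nth_append nth_Cons')
qed

lemma abbc:
  fixes f :: "'a \<Rightarrow> 'a \<Rightarrow> 'a"
  assumes "associative_shelf f"
  shows "f a (f b (f b c)) = f a (f b c)" and "f (f a b) c = f a (f b c)"
  using assms unfolding associative_shelf_def shelf_def
  by (metis)+

lemma face_comm:
  fixes f :: "'a \<Rightarrow> 'a \<Rightarrow> 'a"
  assumes as: "associative_shelf f" and n: "n \<ge> 2" and l: "length xs = n + 2"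
    and ij: "i < j" "j \<le> n + 1"
  shows "face f n i (face f (n + 1) j xs) = face f n (j - 1) (face f (n + 1) i xs)"
proof (rule nth_equalityI)
  show "length (face f n i (face f (n + 1) j xs)) = length (face f n (j - 1) (face f (n + 1) i xs))"
    using assms by (simp add: face_len)
next
  fix k assume k: "k < length (face f n i (face f (n + 1) j xs))"
  then have k: "k < n" using assms by (simp add: face_len)
  have in0: "face f (Suc n) 0 xs ! k' = (if k' = 0 then f (xs!0) (xs!1) else if k' = n then f (xs!Suc n) (xs!0) else xs!Suc k')"
    if "k' < Suc n" for k' using face_nth0[of "Suc n" xs k' f] that n l by simp
  have inn: "face f (Suc n) (Suc n) xs ! k' = (if k' = 0 then f (xs!Suc n) (xs!0) else if k' = n then f (xs!k') (xs!Suc k') else xs!k')"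
    if "k' < Suc n" for k' using face_nthn[of "Suc n" xs k' f] that n l by simp
  have ini: "face f (Suc n) i' xs ! k' = (if Suc k' < i' then xs!k' else if Suc k' = i' \<or> k' = i' then f (xs!k') (xs!Suc k') else xs!Suc k')"
    if "k' < Suc n" "0 < i'" "i' < Suc n" for k' i' using face_nthi[of "Suc n" xs k' i' f] that n l by auto
  have len: "length (face f (Suc n) i' xs) = Suc n" if "i' \<le> Suc n" for i' using face_len[of "Suc n" xs i' f] that n l by simp
  have on0: "face f n 0 ys ! k' = (if k' = 0 then f (ys!0) (ys!1) else if Suc k' = n then f (ys!n) (ys!0) else ys!Suc k')"
    if "length ys = Suc n" "k' < n" for ys k' using face_nth0[OF n that] n that by auto
  have onn: "face f n n ys ! k' = (if k' = 0 then f (ys!n) (ys!0) else if Suc k' = n then f (ys!k') (ys!n) else ys!k')"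
    if "length ys = Suc n" "k' < n" for ys k' using face_nthn[OF n that] n that by auto
  have oni: "face f n i' ys ! k' = (if Suc k' < i' then ys!k' else if Suc k' = i' \<or> k' = i' then f (ys!k') (ys!Suc k') else ys!Suc k')"
    if "length ys = Suc n" "0 < i'" "i' < n" "k' < n" for ys i' k' using that by (auto simp: face_nthi[OF n that(1) that(4) that(2,3)])
  obtain m where m: "n = Suc (Suc m)" using n by (metis add_2_eq_Suc le_Suc_ex)
  note A = abbc[OF as]
  consider "i = 0" "j = 1" | "i = 0" "1 < j" "j < n + 1" | "i = 0" "j = n + 1"
    | "0 < i" "j = i + 1" "j < n + 1" | "0 < i" "i + 1 < j" "j < n + 1"
    | "0 < i" "i < n" "j = n + 1" | "i = n" "j = n + 1"
    using ij by linarith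
  then show "face f n i (face f (n + 1) j xs) ! k = face f n (j - 1) (face f (n + 1) i xs) ! k"
  proof cases
    case 1
    have e1: "face f (Suc n) (Suc 0) xs ! 0 = f (xs!0) (xs!1)" using ini[of 0 "Suc 0"] n by simp
    have e2: "face f (Suc n) (Suc 0) xs ! 1 = f (xs!1) (xs!2)" using ini[of 1 "Suc 0"] n by (simp add: numeral_2_eq_2)
    have e3: "face f (Suc n) 0 xs ! 0 = f (xs!0) (xs!1)" using in0[of 0] n by simp
    have e4: "face f (Suc n) 0 xs ! 1 = xs!2" using in0[of 1] n by (simp add: numeral_2_eq_2)
    have k0: "face f n 0 (face f (Suc n) (Suc 0) xs) ! 0 = face f n 0 (face f (Suc n) 0 xs) ! 0"
      using n by (simp add: on0 len ini in0 A)
    have kl: "face f n 0 (face f (Suc n) (Suc 0) xs) ! k = face f n 0 (face f (Suc n) 0 xs) ! k" if "Suc k = n"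
      using n that by (simp add: on0 len ini in0 A)
    have km: "face f n 0 (face f (Suc n) (Suc 0) xs) ! k = face f n 0 (face f (Suc n) 0 xs) ! k" if "0 < k" "Suc k < n"
      using n that by (simp add: on0 len ini in0 A)
    have r1: "face f n i (face f (n + 1) j xs) ! k = face f n 0 (face f (Suc n) (Suc 0) xs) ! k"
      using 1 by simp
    have r2: "face f n (j-1) (face f (n + 1) i xs) ! k = face f n 0 (face f (Suc n) 0 xs) ! k"
      using 1 by simp
    consider "k = 0" | "Suc k = n" | "0 < k" "Suc k < n" using k by linarith
    then have "face f n 0 (face f (Suc n) (Suc 0) xs) ! k = face f n 0 (face f (Suc n) 0 xs) ! k"
      by cases (use k0 kl km in simp_all)
    then show ?thesis unfolding r1 r2 .
  next
    case 2 define j' where "j' = j - 2"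
    have "j = Suc (Suc j')" using 2 unfolding j'_def by simp
    with 2 show ?thesis using k n by (simp add: on0 oni len in0 ini A) auto
  next
    case 3 then show ?thesis using k n by (simp add: on0 onn len in0 inn A)
  next
    case 4 then show ?thesis using k n by (cases "Suc k < i"; cases "Suc k = i"; cases "k = i"; simp add: oni len ini A)
  next
    case 5 define j' where "j' = j - 1"
    have "j = Suc j'" using 5 unfolding j'_def by simp
    with 5 show ?thesis using k n by (simp add: oni len ini A)
  next
    case 6 then show ?thesis using k n by (simp add: oni onn len ini inn A)
  next
    case 7 then show ?thesis using k n by (cases "k = 0"; cases "Suc k = n"; cases "Suc (Suc k) = n"; simp add: onn len ini inn A)
  qed
qed

lemma face_comm1:
  fixes f :: "'a \<Rightarrow> 'a \<Rightarrow> 'a"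
  assumes as: "associative_shelf f" and l: "length xs = 3"
    and ij: "i < j" "j \<le> 2"
  shows "face f 1 i (face f 2 j xs) = face f 1 (j - 1) (face f 2 i xs)"
proof -
  obtain a b c where xs: "xs = [a, b, c]" using l
    by (metis (no_types) length_0_conv length_Suc_conv numeral_3_eq_3)
  have "(i = 0 \<and> j = 1) \<or> (i = 0 \<and> j = 2) \<or> (i = 1 \<and> j = 2)" using ij by linarith
  then show ?thesis
    using abbc[OF as] unfolding xs by (auto simp: face_def numeral_2_eq_2)
qed

lemma face_comm_all:
  fixes f :: "'a \<Rightarrow> 'a \<Rightarrow> 'a"
  assumes as: "associative_shelf f" and n: "n \<ge> 1" and l: "length xs = n + 2"
    and ij: "i < j" "j \<le> n + 1"
  shows "face f n i (face f (n + 1) j xs) = face f n (j - 1) (face f (n + 1) i xs)"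
proof (cases "n = 1")
  case True
  have j2: "j \<le> 2" and l3: "length xs = 3" using ij l True by auto
  show ?thesis using face_comm1[OF as l3 ij(1) j2] True by (simp add: numeral_2_eq_2)
next
  case False
  then show ?thesis using face_comm[OF as _ l ij] n by simp
qed

lemma lin_ext_frag: "lin_ext g c = frag_extend (frag_of \<circ> g) c"
  unfolding lin_ext_def frag_extend_def
  by (rule sum.cong) (auto intro!: poly_mapping_eqI simp: lookup_single)

lemma lin_ext_comp: "lin_ext g (lin_ext h c) = lin_ext (g \<circ> h) c"
  unfolding lin_ext_frag using frag_extend_compose[of "frag_of \<circ> g" h c]
  by (simp add: comp_assoc)

theorem proposition1p3:
  fixes f :: "'a \<Rightarrow> 'a \<Rightarrow> 'a" and n i j :: nat and c :: "'a list \<Rightarrow>\<^sub>0 int"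
  assumes "associative_shelf f" and "1 \<le> n"
    and "i < j" and "j \<le> n + 1"
    and "c \<in> chains (n + 1)"
  shows "bdry f n i (bdry f (n + 1) j c) = bdry f n (j - 1) (bdry f (n + 1) i c)"
proof -
  have "lin_ext (face f n i \<circ> face f (n + 1) j) c = lin_ext (face f n (j - 1) \<circ> face f (n + 1) i) c"
    unfolding lin_ext_frag
  proof (rule frag_extend_eq)
    fix xs assume "xs \<in> Poly_Mapping.keys c"
    then have "length xs = n + 2" using assms(5) unfolding chains_def by auto
    then show "(frag_of \<circ> (face f n i \<circ> face f (n + 1) j)) xs = (frag_of \<circ> (face f n (j - 1) \<circ> face f (n + 1) i)) xs"
      using face_comm_all[OF assms(1,2) _ assms(3,4)] by simp
  qed
  then show ?thesis unfolding bdry_def lin_ext_comp .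
qed

end
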